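(* Consider the upper-bound type system, and assume the program is well-typed w.r.t. the signature $\Sigma$ in that system. If $\models E:\Gamma$, $E\vdash e\Downarrow v$, and $\Sigma;\Gamma\vdash^{q}_{q'}e:A$ is derivable in the upper-bound type system, then for all $p,r\in\mathbb Q_{\ge0}$ with $p\ge q+\Phi_E(\Gamma)+r$ there exists $p'\in\mathbb Q_{\ge0}$ such that $E\vdash^{p}_{p'}e\Downarrow v$ and $p'\ge q'+\Phi(v:A)+r$.
   Context: Base types: $T ::= \mathsf{unit}\mid\mathsf{bool}\mid\mathsf{int}\mid L(T)\mid T*T$. Values: $v ::= () \mid \mathsf{true}\mid\mathsf{false}\mid n\ (n\in\mathbb Z)\mid [v_1,\dots,v_n]\ (n\ge 0$, the empty list being $\mathsf{nil})\mid (v_1,v_2)$. Value typing $\models v:T$: $()$ has type $\mathsf{unit}$, booleans have type $\mathsf{bool}$, integers have type $\mathsf{int}$, $(v_1,v_2):T_1*T_2$ if $\models v_i:T_i$, and $[v_1,\dots,v_n]:L(T)$ if every $\models v_i:T$ (so $\mathsf{nil}$ has every list type). Expressions (let-normal form; $x,x_i$ are variables, $f$ function identifiers): $e ::= () \mid \mathsf{true}\mid \mathsf{false}\mid n\mid x\mid \mathrm{op}_\diamond(x_1,x_2)\mid \mathrm{app}(f,x)\mid \mathrm{if}(x,e_t,e_f)\mid \mathrm{let}(x,e_1,x.e_2)\mid \mathrm{pair}(x_1,x_2)\mid \mathrm{match}(x,(x_1,x_2).e)\mid \mathsf{nil}\mid \mathrm{cons}(x_1,x_2)\mid\mathrm{match}(x,e_1,(x_h,x_t).e_2)\mid\mathrm{share}(x,(x_1,x_2).e)$,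 with $\diamond\in\{+,-,*,\mathrm{div},\mathrm{mod},=,<>,<,>,\mathrm{and},\mathrm{or}\}$. A program fixes for each function identifier $f$ a body $e_f$ with a single parameter variable $y^f$. An environment $E$ is a finite map from variables to values. Cost semantics: fix arbitrary rational constants $K^{\mathrm{unit}},K^{\mathrm{bool}},K^{\mathrm{int}},K^{\mathrm{nil}},K^{\mathrm{var}},K^{\mathrm{op}},K^{\mathrm{app}},K^{\mathrm{let}},K^{\mathrm{cond}},K^{\mathrm{pair}},K^{\mathrm{matchP}},K^{\mathrm{cons}},K^{\mathrm{matchN}},K^{\mathrm{matchL}}$. The judgement $E\vdash^{q}_{q'} e\Downarrow v$ (all counters $q,q'$ occurring in derivations are in $\mathbb Q_{\ge0}$) is defined inductively: $E\vdash^{q+K^{c}}_{q}c\Downarrow c$ for constants $c\in\{(),\mathsf{true},\mathsf{false},n,\mathsf{nil}\}$ with the corresponding constant $K^{\mathrm{unit}},K^{\mathrm{bool}},K^{\mathrm{int}},K^{\mathrm{nil}}$; $E\vdash^{q+K^{\mathrm{var}}}_q x\Downarrow E(x)$ for $x\in\mathrm{dom}(E)$; $E\vdash^{q+K^{\mathrm{op}}}_q\mathrm{op}_\diamond(x_1,x_2)\Downarrow E(x_1)\diamond E(x_2)$; $E\vdash^{q+K^{\mathrm{pair}}}_q \mathrm{pair}(x_1,x_2)\Downarrow (E(x_1),E(x_2))$; $E\vdash^{q+K^{\mathrm{cons}}}_q\mathrm{cons}(x_h,x_t)\Downarrow[v_1,\dots,v_n]$ if $E(x_h)=v_1$ and $E(x_t)=[v_2,\dots,v_n]$;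 if $E[y^f\mapsto E(x)]\vdash^q_{q'}e_f\Downarrow v$ then $E\vdash^{q+K^{\mathrm{app}}}_{q'}\mathrm{app}(f,x)\Downarrow v$; if $E\vdash^{q-K^{\mathrm{let}}}_{q_1}e_1\Downarrow v_1$ and $E[x\mapsto v_1]\vdash^{q_1}_{q'}e_2\Downarrow v$ then $E\vdash^q_{q'}\mathrm{let}(x,e_1,x.e_2)\Downarrow v$; if $E(x)=\mathsf{true}$ and $E\vdash^{q-K^{\mathrm{cond}}}_{q'}e_t\Downarrow v$ (resp. $E(x)=\mathsf{false}$ and $E\vdash^{q-K^{\mathrm{cond}}}_{q'}e_f\Downarrow v$) then $E\vdash^q_{q'}\mathrm{if}(x,e_t,e_f)\Downarrow v$; if $E(x)=(v_1,v_2)$ and $E[x_1\mapsto v_1,x_2\mapsto v_2]\vdash^{q-K^{\mathrm{matchP}}}_{q'}e\Downarrow v$ then $E\vdash^q_{q'}\mathrm{match}(x,(x_1,x_2).e)\Downarrow v$; if $E(x)=\mathsf{nil}$ and $E\vdash^{q-K^{\mathrm{matchN}}}_{q'}e_1\Downarrow v$ then $E\vdash^q_{q'}\mathrm{match}(x,e_1,(x_h,x_t).e_2)\Downarrow v$; if $E(x)=[v_1,\dots,v_n]$ with $n\ge1$ and $E[x_h\mapsto v_1,x_t\mapsto[v_2,\dots,v_n]]\vdash^{q-K^{\mathrm{matchL}}}_{q'}e_2\Downarrow v$ then $E\vdash^q_{q'}\mathrm{match}(x,e_1,(x_h,x_t).e_2)\Downarrow v$; if $E(x)=v_1$ and $(E\setminus\{x\})[x_1\mapsto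 v_1,x_2\mapsto v_1]\vdash^q_{q'}e\Downarrow v$ then $E\vdash^q_{q'}\mathrm{share}(x,(x_1,x_2).e)\Downarrow v$. We write $E\vdash e\Downarrow v$ if $E\vdash^q_{q'}e\Downarrow v$ for some $q,q'$. Resource-annotated types: $A ::= \mathsf{unit}\mid\mathsf{bool}\mid\mathsf{int}\mid L^p(A)\mid A*A$ with $p\in\mathbb Q_{\ge0}$; $|A|$ denotes the base type obtained by erasing annotations. An annotated context $\Gamma$ is a finite map from variables to annotated types; $\Gamma_1,\Gamma_2$ denotes the union of contexts with disjoint domains (contexts are unordered). $\models E:\Gamma$ means $\models E(x):|\Gamma(x)|$ for all $x\in\mathrm{dom}(\Gamma)$. Potential: $\Phi(v:A)=0$ for $A\in\{\mathsf{unit},\mathsf{bool},\mathsf{int}\}$; $\Phi((v_1,v_2):A_1*A_2)=\Phi(v_1:A_1)+\Phi(v_2:A_2)$; $\Phi([v_1,\dots,v_n]:L^p(A))=n\cdot p+\sum_{i=1}^n\Phi(v_i:A)$; $\Phi_E(\Gamma)=\sum_{x\in\mathrm{dom}(\Gamma)}\Phi(E(x):\Gamma(x))$. Sharing relation: $\curlyvee(A\mid A,A)$ for $A\in\{\mathsf{unit},\mathsf{bool},\mathsf{int}\}$; $\curlyvee(A*B\mid A_1*B_1,A_2*B_2)$ if $\curlyvee(A\mid A_1,A_2)$ and $\curlyvee(B\mid B_1,B_2)$; $\curlyvee(L^p(A)\mid L^{p_1}(A_1),L^{p_2}(A_2))$ if $\curlyvee(A\mid A_1,A_2)$ and $p=p_1+p_2$.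 Subtyping $\preceq$: $A\preceq A$ for atoms; $L^{p_1}(A_1)\preceq L^{p_2}(A_2)$ if $A_1\preceq A_2$ and $p_1\le p_2$; $A_1*B_1\preceq A_2*B_2$ if $A_1\preceq A_2$ and $B_1\preceq B_2$. A signature $\Sigma$ maps function identifiers to nonempty sets of annotated function types $A_1\xrightarrow{q/q'}A_2$ ($q,q'\in\mathbb Q_{\ge0}$). Typing judgements $\Sigma;\Gamma\vdash^{q}_{q'}e:A$ with $q,q'\in\mathbb Q_{\ge0}$ (every annotation in a rule instance must be a nonnegative rational). Syntax-directed rules: $\Sigma;\emptyset\vdash^{K^{\mathrm{unit}}}_0():\mathsf{unit}$; $\Sigma;\emptyset\vdash^{K^{\mathrm{bool}}}_0 b:\mathsf{bool}$; $\Sigma;\emptyset\vdash^{K^{\mathrm{int}}}_0 n:\mathsf{int}$; $\Sigma;\emptyset\vdash^{K^{\mathrm{nil}}}_0\mathsf{nil}:L^p(A)$; $\Sigma;x:A\vdash^{K^{\mathrm{var}}}_0x:A$; $\Sigma;x_1:\mathsf{bool},x_2:\mathsf{bool}\vdash^{K^{\mathrm{op}}}_0\mathrm{op}_\diamond(x_1,x_2):\mathsf{bool}$ for $\diamond\in\{\mathrm{and},\mathrm{or}\}$; $\Sigma;x_1:\mathsf{int},x_2:\mathsf{int}\vdash^{K^{\mathrm{op}}}_0\mathrm{op}_\diamond(x_1,x_2):\mathsf{bool}$ for comparisons and $:\mathsf{int}$ for $+,-,*,\mathrm{div},\mathrm{mod}$; if $A_1\xrightarrow{q/q'}A_2\in\Sigma(f)$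 then $\Sigma;x:A_1\vdash^{q+K^{\mathrm{app}}}_{q'}\mathrm{app}(f,x):A_2$; from $\Sigma;\Gamma_1\vdash^{q-K^{\mathrm{let}}}_{q_1}e_1:A_1$ and $\Sigma;\Gamma_2,x:A_1\vdash^{q_1}_{q'}e_2:A_2$ infer $\Sigma;\Gamma_1,\Gamma_2\vdash^q_{q'}\mathrm{let}(x,e_1,x.e_2):A_2$; from $\Sigma;\Gamma\vdash^{q-K^{\mathrm{cond}}}_{q'}e_t:A$ and $\Sigma;\Gamma\vdash^{q-K^{\mathrm{cond}}}_{q'}e_f:A$ infer $\Sigma;\Gamma,x:\mathsf{bool}\vdash^q_{q'}\mathrm{if}(x,e_t,e_f):A$; $\Sigma;x_1:A_1,x_2:A_2\vdash^{K^{\mathrm{pair}}}_0\mathrm{pair}(x_1,x_2):A_1*A_2$; from $\Sigma;\Gamma,x_1:A_1,x_2:A_2\vdash^{q-K^{\mathrm{matchP}}}_{q'}e:A$ infer $\Sigma;\Gamma,x:A_1*A_2\vdash^q_{q'}\mathrm{match}(x,(x_1,x_2).e):A$; $\Sigma;x_h:A,x_t:L^p(A)\vdash^{p+K^{\mathrm{cons}}}_0\mathrm{cons}(x_h,x_t):L^p(A)$; from $\Sigma;\Gamma\vdash^{q-K^{\mathrm{matchN}}}_{q'}e_1:B$ and $\Sigma;\Gamma,x_h:A,x_t:L^p(A)\vdash^{q+p-K^{\mathrm{matchL}}}_{q'}e_2:B$ infer $\Sigma;\Gamma,x:L^p(A)\vdash^q_{q'}\mathrm{match}(x,e_1,(x_h,x_t).e_2):B$;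 from $\Sigma;\Gamma,x_1:A_1,x_2:A_2\vdash^q_{q'}e:B$ and $\curlyvee(A\mid A_1,A_2)$ infer $\Sigma;\Gamma,x:A\vdash^q_{q'}\mathrm{share}(x,(x_1,x_2).e):B$. Structural rules of the upper-bound system: (Relax) from $\Sigma;\Gamma\vdash^p_{p'}e:A$, $q\ge p$ and $q-p\ge q'-p'$ infer $\Sigma;\Gamma\vdash^q_{q'}e:A$; (Weakening) from $\Sigma;\Gamma\vdash^q_{q'}e:B$ infer $\Sigma;\Gamma,x:A\vdash^q_{q'}e:B$ for any $A$; (Subtype) from $\Sigma;\Gamma\vdash^q_{q'}e:A$ and $B\preceq A$ infer $\Sigma;\Gamma\vdash^q_{q'}e:B$; (Supertype) from $\Sigma;\Gamma,x:B\vdash^q_{q'}e:C$ and $B\preceq A$ infer $\Sigma;\Gamma,x:A\vdash^q_{q'}e:C$. The program is well-typed w.r.t. $\Sigma$ in this system if for every $f$ and every $A_1\xrightarrow{q/q'}A_2\in\Sigma(f)$, $\Sigma;y^f:A_1\vdash^q_{q'}e_f:A_2$ is derivable. *)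

theory Defs
  imports Main "HOL.Rat"
begin

type_synonym var = string
type_synonym fid = string

datatype val = VUnit | VBool bool | VInt int | VList "val list" | VPair val val

datatype bty = TUnit | TBool | TInt | TList bty | TProd bty bty

fun vtype :: "val \<Rightarrow> bty \<Rightarrow> bool" where
  "vtype VUnit TUnit = True"
| "vtype (VBool b) TBool = True"
| "vtype (VInt n) TInt = True"
| "vtype (VList vs) (TList T) = (\<forall>w\<in>set vs. vtype w T)"
| "vtype (VPair v1 v2) (TProd T1 T2) = (vtype v1 T1 \<and> vtype v2 T2)"
| "vtype _ _ = False"

datatype binop = OAdd | OSub | OMul | ODiv | OMod | OEq | ONeq | OLt | OGt | OAnd | OOr

datatype expr =
    EUnit | ETrue | EFalse | EInt int | EVar var
  | EOp binop var var
  | EApp fid var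
  | EIf var expr expr
  | ELet var expr expr          (* let(x, e1, x.e2) *)
  | EPair var var
  | EMatchP var var var expr    (* match(x, (x1,x2).e) *)
  | ENil
  | ECons var var
  | EMatchL var expr var var expr  (* match(x, e1, (xh,xt).e2) *)
  | EShare var var var expr     (* share(x, (x1,x2).e) *)

fun eval_op :: "binop \<Rightarrow> val \<Rightarrow> val \<Rightarrow> val option" where
  "eval_op OAdd (VInt a) (VInt b) = Some (VInt (a + b))"
| "eval_op OSub (VInt a) (VInt b) = Some (VInt (a - b))"
| "eval_op OMul (VInt a) (VInt b) = Some (VInt (a * b))"
| "eval_op ODiv (VInt a) (VInt b) = (if b = 0 then None else Some (VInt (a div b)))"
| "eval_op OMod (VInt a) (VInt b) = (if b = 0 then None else Some (VInt (a mod b)))"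
| "eval_op OEq (VInt a) (VInt b) = Some (VBool (a = b))"
| "eval_op ONeq (VInt a) (VInt b) = Some (VBool (a \<noteq> b))"
| "eval_op OLt (VInt a) (VInt b) = Some (VBool (a < b))"
| "eval_op OGt (VInt a) (VInt b) = Some (VBool (a > b))"
| "eval_op OAnd (VBool a) (VBool b) = Some (VBool (a \<and> b))"
| "eval_op OOr (VBool a) (VBool b) = Some (VBool (a \<or> b))"
| "eval_op _ _ _ = None"

datatype cc = KUnit | KBool | KInt | KNil | KVar | KOp | KApp | KLet | KCond | KPair
  | KMatchP | KCons | KMatchN | KMatchL

type_synonym costs = "cc \<Rightarrow> rat"
type_synonym env = "var \<rightharpoonup> val"
text \<open>A program maps each function identifier f to (parameter variable y^f, body e_f).\<close>
type_synonym prog = "fid \<Rightarrow> var \<times> expr"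

section \<open>Cost semantics  E |-^q_q' e \<Down> v\<close>

inductive eval :: "costs \<Rightarrow> prog \<Rightarrow> env \<Rightarrow> rat \<Rightarrow> rat \<Rightarrow> expr \<Rightarrow> val \<Rightarrow> bool" where
  E_Unit: "\<lbrakk>0 \<le> q; 0 \<le> q + K KUnit\<rbrakk> \<Longrightarrow> eval K P E (q + K KUnit) q EUnit VUnit"
| E_True: "\<lbrakk>0 \<le> q; 0 \<le> q + K KBool\<rbrakk> \<Longrightarrow> eval K P E (q + K KBool) q ETrue (VBool True)"
| E_False: "\<lbrakk>0 \<le> q; 0 \<le> q + K KBool\<rbrakk> \<Longrightarrow> eval K P E (q + K KBool) q EFalse (VBool False)"
| E_Int: "\<lbrakk>0 \<le> q; 0 \<le> q + K KInt\<rbrakk> \<Longrightarrow> eval K P E (q + K KInt) q (EInt n) (VInt n)"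
| E_Nil: "\<lbrakk>0 \<le> q; 0 \<le> q + K KNil\<rbrakk> \<Longrightarrow> eval K P E (q + K KNil) q ENil (VList [])"
| E_Var: "\<lbrakk>E x = Some v; 0 \<le> q; 0 \<le> q + K KVar\<rbrakk> \<Longrightarrow> eval K P E (q + K KVar) q (EVar x) v"
| E_Op: "\<lbrakk>E x1 = Some v1; E x2 = Some v2; eval_op d v1 v2 = Some v; 0 \<le> q; 0 \<le> q + K KOp\<rbrakk>
         \<Longrightarrow> eval K P E (q + K KOp) q (EOp d x1 x2) v"
| E_Pair: "\<lbrakk>E x1 = Some v1; E x2 = Some v2; 0 \<le> q; 0 \<le> q + K KPair\<rbrakk>
         \<Longrightarrow> eval K P E (q + K KPair) q (EPair x1 x2) (VPair v1 v2)"
| E_Cons: "\<lbrakk>E xh = Some v1; E xt = Some (VList vs); 0 \<le> q; 0 \<le> q + K KCons\<rbrakk>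
         \<Longrightarrow> eval K P E (q + K KCons) q (ECons xh xt) (VList (v1 # vs))"
| E_App: "\<lbrakk>P f = (y, ef); E x = Some u; eval K P (E(y \<mapsto> u)) q q' ef v; 0 \<le> q + K KApp\<rbrakk>
         \<Longrightarrow> eval K P E (q + K KApp) q' (EApp f x) v"
| E_Let: "\<lbrakk>eval K P E (q - K KLet) q1 e1 v1; eval K P (E(x \<mapsto> v1)) q1 q' e2 v; 0 \<le> q\<rbrakk>
         \<Longrightarrow> eval K P E q q' (ELet x e1 e2) v"
| E_IfT: "\<lbrakk>E x = Some (VBool True); eval K P E (q - K KCond) q' et v; 0 \<le> q\<rbrakk>
         \<Longrightarrow> eval K P E q q' (EIf x et ef) v"
| E_IfF: "\<lbrakk>E x = Some (VBool False); eval K P E (q - K KCond) q' ef v; 0 \<le> q\<rbrakk>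
         \<Longrightarrow> eval K P E q q' (EIf x et ef) v"
| E_MatchP: "\<lbrakk>E x = Some (VPair v1 v2); eval K P (E(x1 \<mapsto> v1, x2 \<mapsto> v2)) (q - K KMatchP) q' e v; 0 \<le> q\<rbrakk>
         \<Longrightarrow> eval K P E q q' (EMatchP x x1 x2 e) v"
| E_MatchN: "\<lbrakk>E x = Some (VList []); eval K P E (q - K KMatchN) q' e1 v; 0 \<le> q\<rbrakk>
         \<Longrightarrow> eval K P E q q' (EMatchL x e1 xh xt e2) v"
| E_MatchC: "\<lbrakk>E x = Some (VList (v1 # vs)); eval K P (E(xh \<mapsto> v1, xt \<mapsto> VList vs)) (q - K KMatchL) q' e2 v; 0 \<le> q\<rbrakk>
         \<Longrightarrow> eval K P E q q' (EMatchL x e1 xh xt e2) v"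
| E_Share: "\<lbrakk>E x = Some v1; eval K P ((E(x := None))(x1 \<mapsto> v1, x2 \<mapsto> v1)) q q' e v\<rbrakk>
         \<Longrightarrow> eval K P E q q' (EShare x x1 x2 e) v"

section \<open>Annotated types, potential, sharing, subtyping\<close>

datatype aty = AUnit | ABool | AInt | AList rat aty | AProd aty aty

fun erase :: "aty \<Rightarrow> bty" where
  "erase AUnit = TUnit" | "erase ABool = TBool" | "erase AInt = TInt"
| "erase (AList p A) = TList (erase A)"
| "erase (AProd A B) = TProd (erase A) (erase B)"

fun nonneg :: "aty \<Rightarrow> bool" where
  "nonneg (AList p A) = (0 \<le> p \<and> nonneg A)"
| "nonneg (AProd A B) = (nonneg A \<and> nonneg B)"
| "nonneg _ = True"

fun phi :: "val \<Rightarrow> aty \<Rightarrow> rat" where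
  "phi (VPair v1 v2) (AProd A1 A2) = phi v1 A1 + phi v2 A2"
| "phi (VList vs) (AList p A) = of_nat (length vs) * p + sum_list (map (\<lambda>w. phi w A) vs)"
| "phi _ _ = 0"

type_synonym ctx = "var \<rightharpoonup> aty"

definition models :: "env \<Rightarrow> ctx \<Rightarrow> bool" where
  "models E \<Gamma> \<longleftrightarrow> (\<forall>x \<in> dom \<Gamma>. \<exists>v. E x = Some v \<and> vtype v (erase (the (\<Gamma> x))))"

definition Phi_env :: "env \<Rightarrow> ctx \<Rightarrow> rat" where
  "Phi_env E \<Gamma> = (\<Sum>x \<in> dom \<Gamma>. phi (the (E x)) (the (\<Gamma> x)))"

inductive share_rel :: "aty \<Rightarrow> aty \<Rightarrow> aty \<Rightarrow> bool" where
  "share_rel AUnit AUnit AUnit"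
| "share_rel ABool ABool ABool"
| "share_rel AInt AInt AInt"
| "\<lbrakk>share_rel A A1 A2; share_rel B B1 B2\<rbrakk> \<Longrightarrow> share_rel (AProd A B) (AProd A1 B1) (AProd A2 B2)"
| "\<lbrakk>share_rel A A1 A2; p = p1 + p2\<rbrakk> \<Longrightarrow> share_rel (AList p A) (AList p1 A1) (AList p2 A2)"

inductive subty :: "aty \<Rightarrow> aty \<Rightarrow> bool" where
  "subty AUnit AUnit"
| "subty ABool ABool"
| "subty AInt AInt"
| "\<lbrakk>subty A1 A2; p1 \<le> p2\<rbrakk> \<Longrightarrow> subty (AList p1 A1) (AList p2 A2)"
| "\<lbrakk>subty A1 A2; subty B1 B2\<rbrakk> \<Longrightarrow> subty (AProd A1 B1) (AProd A2 B2)"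

section \<open>Signatures and the upper-bound type system\<close>

text \<open>An annotated function type A1 -q/q'-> A2 is represented as (A1, q, q', A2).\<close>
type_synonym sig = "fid \<Rightarrow> (aty \<times> rat \<times> rat \<times> aty) set"

definition wf_sig :: "sig \<Rightarrow> bool" where
  "wf_sig \<Sigma> \<longleftrightarrow> (\<forall>f. \<Sigma> f \<noteq> {} \<and>
      (\<forall>(A1, q, q', A2) \<in> \<Sigma> f. nonneg A1 \<and> nonneg A2 \<and> 0 \<le> q \<and> 0 \<le> q'))"

definition ann_ok :: "ctx \<Rightarrow> rat \<Rightarrow> rat \<Rightarrow> aty \<Rightarrow> bool" where
  "ann_ok \<Gamma> q q' A \<longleftrightarrow> (\<forall>x \<in> dom \<Gamma>. nonneg (the (\<Gamma> x))) \<and> 0 \<le> q \<and> 0 \<le> q' \<and> nonneg A"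

inductive typed :: "costs \<Rightarrow> sig \<Rightarrow> ctx \<Rightarrow> rat \<Rightarrow> rat \<Rightarrow> expr \<Rightarrow> aty \<Rightarrow> bool" where
  T_Unit: "ann_ok Map.empty (K KUnit) 0 AUnit \<Longrightarrow> typed K \<Sigma> Map.empty (K KUnit) 0 EUnit AUnit"
| T_True: "ann_ok Map.empty (K KBool) 0 ABool \<Longrightarrow> typed K \<Sigma> Map.empty (K KBool) 0 ETrue ABool"
| T_False: "ann_ok Map.empty (K KBool) 0 ABool \<Longrightarrow> typed K \<Sigma> Map.empty (K KBool) 0 EFalse ABool"
| T_Int: "ann_ok Map.empty (K KInt) 0 AInt \<Longrightarrow> typed K \<Sigma> Map.empty (K KInt) 0 (EInt n) AInt"
| T_Nil: "ann_ok Map.empty (K KNil) 0 (AList p A) \<Longrightarrow> typed K \<Sigma> Map.empty (K KNil) 0 ENil (AList p A)"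
| T_Var: "ann_ok [x \<mapsto> A] (K KVar) 0 A \<Longrightarrow> typed K \<Sigma> [x \<mapsto> A] (K KVar) 0 (EVar x) A"
| T_OpB: "\<lbrakk>d \<in> {OAnd, OOr}; x1 \<noteq> x2; ann_ok [x1 \<mapsto> ABool, x2 \<mapsto> ABool] (K KOp) 0 ABool\<rbrakk>
         \<Longrightarrow> typed K \<Sigma> [x1 \<mapsto> ABool, x2 \<mapsto> ABool] (K KOp) 0 (EOp d x1 x2) ABool"
| T_OpCmp: "\<lbrakk>d \<in> {OEq, ONeq, OLt, OGt}; x1 \<noteq> x2; ann_ok [x1 \<mapsto> AInt, x2 \<mapsto> AInt] (K KOp) 0 ABool\<rbrakk>
         \<Longrightarrow> typed K \<Sigma> [x1 \<mapsto> AInt, x2 \<mapsto> AInt] (K KOp) 0 (EOp d x1 x2) ABool"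
| T_OpArith: "\<lbrakk>d \<in> {OAdd, OSub, OMul, ODiv, OMod}; x1 \<noteq> x2; ann_ok [x1 \<mapsto> AInt, x2 \<mapsto> AInt] (K KOp) 0 AInt\<rbrakk>
         \<Longrightarrow> typed K \<Sigma> [x1 \<mapsto> AInt, x2 \<mapsto> AInt] (K KOp) 0 (EOp d x1 x2) AInt"
| T_App: "\<lbrakk>(A1, q, q', A2) \<in> \<Sigma> f; 0 \<le> q; ann_ok [x \<mapsto> A1] (q + K KApp) q' A2\<rbrakk>
         \<Longrightarrow> typed K \<Sigma> [x \<mapsto> A1] (q + K KApp) q' (EApp f x) A2"
| T_Let: "\<lbrakk>typed K \<Sigma> \<Gamma>1 (q - K KLet) q1 e1 A1; typed K \<Sigma> (\<Gamma>2(x \<mapsto> A1)) q1 q' e2 A2;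
           dom \<Gamma>1 \<inter> dom \<Gamma>2 = {}; x \<notin> dom \<Gamma>2; ann_ok (\<Gamma>1 ++ \<Gamma>2) q q' A2\<rbrakk>
         \<Longrightarrow> typed K \<Sigma> (\<Gamma>1 ++ \<Gamma>2) q q' (ELet x e1 e2) A2"
| T_If: "\<lbrakk>typed K \<Sigma> \<Gamma> (q - K KCond) q' et A; typed K \<Sigma> \<Gamma> (q - K KCond) q' ef A;
          x \<notin> dom \<Gamma>; ann_ok (\<Gamma>(x \<mapsto> ABool)) q q' A\<rbrakk>
         \<Longrightarrow> typed K \<Sigma> (\<Gamma>(x \<mapsto> ABool)) q q' (EIf x et ef) A"
| T_Pair: "\<lbrakk>x1 \<noteq> x2; ann_ok [x1 \<mapsto> A1, x2 \<mapsto> A2] (K KPair) 0 (AProd A1 A2)\<rbrakk>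
         \<Longrightarrow> typed K \<Sigma> [x1 \<mapsto> A1, x2 \<mapsto> A2] (K KPair) 0 (EPair x1 x2) (AProd A1 A2)"
| T_MatchP: "\<lbrakk>typed K \<Sigma> (\<Gamma>(x1 \<mapsto> A1, x2 \<mapsto> A2)) (q - K KMatchP) q' e A;
            x1 \<noteq> x2; x1 \<notin> dom \<Gamma>; x2 \<notin> dom \<Gamma>; x \<notin> dom \<Gamma>;
            ann_ok (\<Gamma>(x \<mapsto> AProd A1 A2)) q q' A\<rbrakk>
         \<Longrightarrow> typed K \<Sigma> (\<Gamma>(x \<mapsto> AProd A1 A2)) q q' (EMatchP x x1 x2 e) A"
| T_Cons: "\<lbrakk>xh \<noteq> xt; ann_ok [xh \<mapsto> A, xt \<mapsto> AList p A] (p + K KCons) 0 (AList p A)\<rbrakk>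
         \<Longrightarrow> typed K \<Sigma> [xh \<mapsto> A, xt \<mapsto> AList p A] (p + K KCons) 0 (ECons xh xt) (AList p A)"
| T_MatchL: "\<lbrakk>typed K \<Sigma> \<Gamma> (q - K KMatchN) q' e1 B;
            typed K \<Sigma> (\<Gamma>(xh \<mapsto> A, xt \<mapsto> AList p A)) (q + p - K KMatchL) q' e2 B;
            xh \<noteq> xt; xh \<notin> dom \<Gamma>; xt \<notin> dom \<Gamma>; x \<notin> dom \<Gamma>;
            ann_ok (\<Gamma>(x \<mapsto> AList p A)) q q' B\<rbrakk>
         \<Longrightarrow> typed K \<Sigma> (\<Gamma>(x \<mapsto> AList p A)) q q' (EMatchL x e1 xh xt e2) B"
| T_Share: "\<lbrakk>typed K \<Sigma> (\<Gamma>(x1 \<mapsto> A1, x2 \<mapsto> A2)) q q' e B; share_rel A A1 A2;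
            x1 \<noteq> x2; x1 \<notin> dom \<Gamma>; x2 \<notin> dom \<Gamma>; x \<notin> dom \<Gamma>;
            ann_ok (\<Gamma>(x \<mapsto> A)) q q' B\<rbrakk>
         \<Longrightarrow> typed K \<Sigma> (\<Gamma>(x \<mapsto> A)) q q' (EShare x x1 x2 e) B"
| T_Relax: "\<lbrakk>typed K \<Sigma> \<Gamma> p p' e A; q \<ge> p; q - p \<ge> q' - p'; ann_ok \<Gamma> q q' A\<rbrakk>
         \<Longrightarrow> typed K \<Sigma> \<Gamma> q q' e A"
| T_Weak: "\<lbrakk>typed K \<Sigma> \<Gamma> q q' e B; x \<notin> dom \<Gamma>; ann_ok (\<Gamma>(x \<mapsto> A)) q q' B\<rbrakk>
         \<Longrightarrow> typed K \<Sigma> (\<Gamma>(x \<mapsto> A)) q q' e B"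
| T_Sub: "\<lbrakk>typed K \<Sigma> \<Gamma> q q' e A; subty B A; ann_ok \<Gamma> q q' B\<rbrakk>
         \<Longrightarrow> typed K \<Sigma> \<Gamma> q q' e B"
| T_Super: "\<lbrakk>typed K \<Sigma> (\<Gamma>(x \<mapsto> B)) q q' e C; subty B A; x \<notin> dom \<Gamma>; ann_ok (\<Gamma>(x \<mapsto> A)) q q' C\<rbrakk>
         \<Longrightarrow> typed K \<Sigma> (\<Gamma>(x \<mapsto> A)) q q' e C"

text \<open>Well-typedness of a program w.r.t. a signature (y^f = fst (P f), e_f = snd (P f)).\<close>
definition prog_typed :: "costs \<Rightarrow> sig \<Rightarrow> prog \<Rightarrow> bool" where
  "prog_typed K \<Sigma> P \<longleftrightarrow>
     (\<forall>f. \<forall>(A1, q, q', A2) \<in> \<Sigma> f. typed K \<Sigma> [fst (P f) \<mapsto> A1] q q' (snd (P f)) A2)"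

end

theory Submission imports Defs begin

lemma phi_nonneg: "nonneg A \<Longrightarrow> 0 \<le> phi v A"
proof (induction v arbitrary: A)
  case (VList vs)
  then show ?case by (cases A) (auto intro!: add_nonneg_nonneg sum_list_nonneg)
next
  case (VPair v1 v2) then show ?case by (cases A) auto
qed auto

lemma subty_props: "subty B A \<Longrightarrow> erase B = erase A \<and> (\<forall>v. phi v B \<le> phi v A)"
proof (induction rule: subty.induct)
  case (4 A1 A2 p1 p2)
  have "phi v (AList p1 A1) \<le> phi v (AList p2 A2)" for v
  proof (cases v)
    case (VList vs)
    have "of_nat (length vs) * p1 \<le> of_nat (length vs) * p2" using 4 by (simp add: mult_left_mono)
    moreover have "(\<Sum>w\<leftarrow>vs. phi w A1) \<le> (\<Sum>w\<leftarrow>vs. phi w A2)" using 4 by (intro sum_list_mono) auto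
    ultimately show ?thesis using VList by simp
  qed auto
  then show ?case using 4 by simp
next
  case (5 A1 A2 B1 B2)
  have "phi v (AProd A1 B1) \<le> phi v (AProd A2 B2)" for v
    using 5 by (cases v) (auto intro: add_mono)
  then show ?case using 5 by simp
qed auto

lemma share_props: "share_rel A A1 A2 \<Longrightarrow> erase A1 = erase A \<and> erase A2 = erase A \<and> (\<forall>v. phi v A = phi v A1 + phi v A2)"
proof (induction rule: share_rel.induct)
  case (4 A A1 A2 B B1 B2)
  have "phi v (AProd A B) = phi v (AProd A1 B1) + phi v (AProd A2 B2)" for v
    using 4 by (cases v) auto
  then show ?case using 4 by simp
next
  case (5 A A1 A2 p p1 p2)
  have "phi v (AList p A) = phi v (AList p1 A1) + phi v (AList p2 A2)" for v
  proof (cases v)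
    case (VList vs)
    have "(\<Sum>w\<leftarrow>vs. phi w A) = (\<Sum>w\<leftarrow>vs. phi w A1 + phi w A2)" using 5 by (intro arg_cong[where f=sum_list] map_cong) auto
    also have "\<dots> = (\<Sum>w\<leftarrow>vs. phi w A1) + (\<Sum>w\<leftarrow>vs. phi w A2)" by (rule sum_list_addf)
    finally show ?thesis using VList 5 by (simp add: algebra_simps)
  qed auto
  then show ?case using 5 by simp
qed auto

lemma typed_ann: "typed K \<Sigma> \<Gamma> q q' e A \<Longrightarrow> ann_ok \<Gamma> q q' A"
  apply (induction rule: typed.induct) by assumption+

lemma Phi_env_empty[simp]: "Phi_env E Map.empty = 0"
  by (simp add: Phi_env_def)

lemma Phi_env_upd: "x \<notin> dom \<Gamma> \<Longrightarrow> finite (dom \<Gamma>) \<Longrightarrow>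
   Phi_env E (\<Gamma>(x \<mapsto> A)) = Phi_env E \<Gamma> + phi (the (E x)) A"
  unfolding Phi_env_def
  apply (simp add: sum.insert)
  apply (intro sum.cong) apply auto
  done

lemma Phi_env_single[simp]: "Phi_env E [x \<mapsto> A] = phi (the (E x)) A"
  using Phi_env_upd[of x Map.empty] by simp

lemma Phi_env_cong: "(\<And>y. y \<in> dom \<Gamma> \<Longrightarrow> E y = E' y) \<Longrightarrow> Phi_env E \<Gamma> = Phi_env E' \<Gamma>"
  unfolding Phi_env_def by (intro sum.cong) auto

lemma Phi_env_add: "dom \<Gamma>1 \<inter> dom \<Gamma>2 = {} \<Longrightarrow> finite (dom \<Gamma>1) \<Longrightarrow> finite (dom \<Gamma>2) \<Longrightarrow>
   Phi_env E (\<Gamma>1 ++ \<Gamma>2) = Phi_env E \<Gamma>1 + Phi_env E \<Gamma>2"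
proof -
  assume a: "dom \<Gamma>1 \<inter> dom \<Gamma>2 = {}" "finite (dom \<Gamma>1)" "finite (dom \<Gamma>2)"
  have d: "dom (\<Gamma>1 ++ \<Gamma>2) = dom \<Gamma>1 \<union> dom \<Gamma>2" by auto
  show ?thesis unfolding Phi_env_def d
    using a apply (simp add: sum.union_disjoint)
    apply (intro arg_cong2[where f="(+)"] sum.cong)
    apply (auto simp: map_add_def split: option.splits)
    done
qed

lemma Phi_env_nonneg: "\<forall>x\<in>dom \<Gamma>. nonneg (the (\<Gamma> x)) \<Longrightarrow> 0 \<le> Phi_env E \<Gamma>"
  unfolding Phi_env_def by (intro sum_nonneg) (auto intro: phi_nonneg)

lemma models_fin: "models E \<Gamma> \<Longrightarrow> finite (dom E) \<Longrightarrow> finite (dom \<Gamma>)"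
  unfolding models_def by (metis domI finite_subset subsetI)


definition cl :: "costs \<Rightarrow> prog \<Rightarrow> env \<Rightarrow> expr \<Rightarrow> val \<Rightarrow> ctx \<Rightarrow> rat \<Rightarrow> rat \<Rightarrow> aty \<Rightarrow> bool" where
  "cl K P E e v \<Gamma> q q' A \<longleftrightarrow> (models E \<Gamma> \<longrightarrow> vtype v (erase A) \<and>
     (\<forall>p r. 0 \<le> p \<longrightarrow> 0 \<le> r \<longrightarrow> q + Phi_env E \<Gamma> + r \<le> p \<longrightarrow>
        (\<exists>p'. 0 \<le> p' \<and> eval K P E p p' e v \<and> q' + phi v A + r \<le> p')))"

lemma clI:
  assumes "models E \<Gamma> \<Longrightarrow> vtype v (erase A)"
  and "\<And>p r. models E \<Gamma> \<Longrightarrow> 0 \<le> p \<Longrightarrow> 0 \<le> r \<Longrightarrow> q + Phi_env E \<Gamma> + r \<le> p \<Longrightarrow>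
        \<exists>p'. 0 \<le> p' \<and> eval K P E p p' e v \<and> q' + phi v A + r \<le> p'"
  shows "cl K P E e v \<Gamma> q q' A"
  using assms unfolding cl_def by blast

lemma clD:
  assumes "cl K P E e v \<Gamma> q q' A" "models E \<Gamma>"
  shows "vtype v (erase A)"
   "\<And>p r. 0 \<le> p \<Longrightarrow> 0 \<le> r \<Longrightarrow> q + Phi_env E \<Gamma> + r \<le> p \<Longrightarrow>
        \<exists>p'. 0 \<le> p' \<and> eval K P E p p' e v \<and> q' + phi v A + r \<le> p'"
  using assms unfolding cl_def by blast+

lemma cl_relax:
  assumes c: "cl K P E e v \<Gamma> p0 p0' A" and "p0 \<le> q" "q' - p0' \<le> q - p0"
  shows "cl K P E e v \<Gamma> q q' A"
proof (rule clI)
  assume m: "models E \<Gamma>"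
  show "vtype v (erase A)" using clD(1)[OF c m] .
  fix p r :: rat assume h: "0 \<le> p" "0 \<le> r" "q + Phi_env E \<Gamma> + r \<le> p"
  obtain p' where "0 \<le> p'" "eval K P E p p' e v" "p0' + phi v A + (r + (q - p0)) \<le> p'"
    using clD(2)[OF c m h(1), of "r + (q - p0)"] h assms by auto
  then show "\<exists>p'. 0 \<le> p' \<and> eval K P E p p' e v \<and> q' + phi v A + r \<le> p'"
    using assms by (intro exI[of _ p']) auto
qed

lemma cl_sub:
  assumes c: "cl K P E e v \<Gamma> q q' A" and s: "subty B A"
  shows "cl K P E e v \<Gamma> q q' B"
proof (rule clI)
  note sp = subty_props[OF s]
  assume m: "models E \<Gamma>"
  show "vtype v (erase B)" using clD(1)[OF c m] sp by simp
  fix p r :: rat assume h: "0 \<le> p" "0 \<le> r" "q + Phi_env E \<Gamma> + r \<le> p"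
  obtain p' where "0 \<le> p'" "eval K P E p p' e v" "q' + phi v A + r \<le> p'"
    using clD(2)[OF c m h] by auto
  then show "\<exists>p'. 0 \<le> p' \<and> eval K P E p p' e v \<and> q' + phi v B + r \<le> p'"
    using sp by (intro exI[of _ p']) (auto intro: order_trans[rotated])
qed

lemma models_upd: "x \<notin> dom \<Gamma> \<Longrightarrow> models E (\<Gamma>(x \<mapsto> A)) \<longleftrightarrow> models E \<Gamma> \<and> (\<exists>v. E x = Some v \<and> vtype v (erase A))"
  unfolding models_def by auto

lemma cl_weak:
  assumes c: "cl K P E e v \<Gamma> q q' B" and x: "x \<notin> dom \<Gamma>" and a: "ann_ok (\<Gamma>(x \<mapsto> A)) q q' B"
    and f: "finite (dom E)"
  shows "cl K P E e v (\<Gamma>(x \<mapsto> A)) q q' B"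
proof (rule clI)
  assume m': "models E (\<Gamma>(x \<mapsto> A))"
  then have m: "models E \<Gamma>" using models_upd[OF x] by simp
  show "vtype v (erase B)" using clD(1)[OF c m] .
  have "nonneg A" using a unfolding ann_ok_def by auto
  then have "Phi_env E \<Gamma> \<le> Phi_env E (\<Gamma>(x \<mapsto> A))"
    using Phi_env_upd[OF x models_fin[OF m f]] phi_nonneg by auto
  moreover fix p r :: rat assume h: "0 \<le> p" "0 \<le> r" "q + Phi_env E (\<Gamma>(x \<mapsto> A)) + r \<le> p"
  ultimately show "\<exists>p'. 0 \<le> p' \<and> eval K P E p p' e v \<and> q' + phi v B + r \<le> p'"
    using clD(2)[OF c m h(1,2)] by auto
qed

lemma cl_super:
  assumes c: "cl K P E e v (\<Gamma>(x \<mapsto> B)) q q' C" and s: "subty B A" and x: "x \<notin> dom \<Gamma>"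
    and f: "finite (dom E)"
  shows "cl K P E e v (\<Gamma>(x \<mapsto> A)) q q' C"
proof (rule clI)
  note sp = subty_props[OF s]
  assume m': "models E (\<Gamma>(x \<mapsto> A))"
  then have m: "models E (\<Gamma>(x \<mapsto> B))" using models_upd[OF x] sp by simp
  show "vtype v (erase C)" using clD(1)[OF c m] .
  have "Phi_env E (\<Gamma>(x \<mapsto> B)) \<le> Phi_env E (\<Gamma>(x \<mapsto> A))"
    using Phi_env_upd[OF x models_fin[OF _ f]] m' models_upd[OF x] sp by auto
  moreover fix p r :: rat assume h: "0 \<le> p" "0 \<le> r" "q + Phi_env E (\<Gamma>(x \<mapsto> A)) + r \<le> p"
  ultimately show "\<exists>p'. 0 \<le> p' \<and> eval K P E p p' e v \<and> q' + phi v C + r \<le> p'"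
    using clD(2)[OF c m h(1,2)] by auto
qed


lemma phi_atom[simp]: "phi w ABool = 0" "phi w AInt = 0" "phi w AUnit = 0"
  by (cases w; simp)+

lemma eval_op_type: "eval_op d v1 v2 = Some v \<Longrightarrow>
   (d \<in> {OAdd,OSub,OMul,ODiv,OMod} \<longrightarrow> vtype v TInt) \<and> (d \<notin> {OAdd,OSub,OMul,ODiv,OMod} \<longrightarrow> vtype v TBool)"
  by (cases "(d,v1,v2)" rule: eval_op.cases) (auto split: if_splits)

lemma ann_nonneg: "ann_ok \<Gamma> q q' A \<Longrightarrow> 0 \<le> Phi_env E \<Gamma>"
  unfolding ann_ok_def by (auto intro: Phi_env_nonneg)

lemma const_sd:
  assumes ev: "\<And>p'. 0 \<le> p' \<Longrightarrow> 0 \<le> p' + c \<Longrightarrow> eval K P E (p' + c) p' e w"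
    and ty: "vtype w (erase T)" and ph: "phi w T = 0"
  shows "cl K P E e w Map.empty c 0 T"
proof (rule clI)
  fix p r :: rat assume h: "0 \<le> p" "0 \<le> r" "c + Phi_env E Map.empty + r \<le> p"
  have "eval K P E (p - c + c) (p - c) e w" by (rule ev) (use h in auto)
  then show "\<exists>p'. 0 \<le> p' \<and> eval K P E p p' e w \<and> 0 + phi w T + r \<le> p'"
    using h ph by (intro exI[of _ "p - c"]) auto
qed (rule ty)

lemma var_sd:
  assumes "E x = Some v" "ann_ok [x \<mapsto> A] (K KVar) 0 A"
  shows "cl K P E (EVar x) v [x \<mapsto> A] (K KVar) 0 A"
proof (rule clI)
  assume "models E [x \<mapsto> A]" then show "vtype v (erase A)" using assms unfolding models_def by auto
  fix p r :: rat assume h: "0 \<le> p" "0 \<le> r" "K KVar + Phi_env E [x \<mapsto> A] + r \<le> p"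
  have "0 \<le> phi v A" using assms(2) unfolding ann_ok_def by (auto intro: phi_nonneg)
  then have "eval K P E (p - K KVar + K KVar) (p - K KVar) (EVar x) v"
    using h assms by (intro E_Var) auto
  then show "\<exists>p'. 0 \<le> p' \<and> eval K P E p p' (EVar x) v \<and> 0 + phi v A + r \<le> p'"
    using h assms \<open>0 \<le> phi v A\<close> by (intro exI[of _ "p - K KVar"]) auto
qed

lemma op_sd:
  assumes "E x1 = Some v1" "E x2 = Some v2" "eval_op d v1 v2 = Some v" "x1 \<noteq> x2"
   "(A1 = ABool \<or> A1 = AInt)" "(d \<in> {OAdd,OSub,OMul,ODiv,OMod} \<longrightarrow> B = AInt) \<and> (d \<notin> {OAdd,OSub,OMul,ODiv,OMod} \<longrightarrow> B = ABool)"
  shows "cl K P E (EOp d x1 x2) v [x1 \<mapsto> A1, x2 \<mapsto> A1] (K KOp) 0 B"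
proof (rule clI)
  have B: "B = AInt \<or> B = ABool" using assms(6) by blast
  then have pB: "phi v B = 0" by auto
  have "(B = AInt \<and> vtype v TInt) \<or> (B = ABool \<and> vtype v TBool)" using eval_op_type[OF assms(3)] assms(6) by blast
  then show "vtype v (erase B)" by auto
  have pA: "phi (the (E x2)) A1 = 0" "Phi_env E [x1 \<mapsto> A1] = 0" using assms(5) by auto
  have ph: "Phi_env E [x1 \<mapsto> A1, x2 \<mapsto> A1] = 0"
    using Phi_env_upd[of x2 "[x1 \<mapsto> A1]" E A1] assms(4) pA by simp
  fix p r :: rat assume h: "0 \<le> p" "0 \<le> r" "K KOp + Phi_env E [x1 \<mapsto> A1, x2 \<mapsto> A1] + r \<le> p"
  have "eval K P E (p - K KOp + K KOp) (p - K KOp) (EOp d x1 x2) v"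
    apply (rule E_Op[OF assms(1-3)]) using h ph by simp_all
  then show "\<exists>p'. 0 \<le> p' \<and> eval K P E p p' (EOp d x1 x2) v \<and> 0 + phi v B + r \<le> p'"
    using h ph pB by (intro exI[of _ "p - K KOp"]) simp
qed

lemma pair_sd:
  assumes "E x1 = Some v1" "E x2 = Some v2" "x1 \<noteq> x2" "ann_ok [x1 \<mapsto> A1, x2 \<mapsto> A2] (K KPair) 0 (AProd A1 A2)"
  shows "cl K P E (EPair x1 x2) (VPair v1 v2) [x1 \<mapsto> A1, x2 \<mapsto> A2] (K KPair) 0 (AProd A1 A2)"
proof (rule clI)
  assume "models E [x1 \<mapsto> A1, x2 \<mapsto> A2]" then show "vtype (VPair v1 v2) (erase (AProd A1 A2))"
    using assms unfolding models_def by auto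
  have ph: "Phi_env E [x1 \<mapsto> A1, x2 \<mapsto> A2] = phi v1 A1 + phi v2 A2"
    using Phi_env_upd[of x2 "[x1 \<mapsto> A1]" E A2] assms by auto
  have nn: "0 \<le> phi v1 A1 + phi v2 A2" using assms(4) unfolding ann_ok_def by (auto intro!: add_nonneg_nonneg phi_nonneg)
  fix p r :: rat assume h: "0 \<le> p" "0 \<le> r" "K KPair + Phi_env E [x1 \<mapsto> A1, x2 \<mapsto> A2] + r \<le> p"
  have "eval K P E (p - K KPair + K KPair) (p - K KPair) (EPair x1 x2) (VPair v1 v2)"
    using h assms ph nn by (intro E_Pair) auto
  then show "\<exists>p'. 0 \<le> p' \<and> eval K P E p p' (EPair x1 x2) (VPair v1 v2) \<and> 0 + phi (VPair v1 v2) (AProd A1 A2) + r \<le> p'"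
    using h ph nn by (intro exI[of _ "p - K KPair"]) auto
qed

lemma cons_sd:
  assumes "E xh = Some v1" "E xt = Some (VList vs)" "xh \<noteq> xt" "ann_ok [xh \<mapsto> A, xt \<mapsto> AList q A] (q + K KCons) 0 (AList q A)"
  shows "cl K P E (ECons xh xt) (VList (v1 # vs)) [xh \<mapsto> A, xt \<mapsto> AList q A] (q + K KCons) 0 (AList q A)"
proof (rule clI)
  assume "models E [xh \<mapsto> A, xt \<mapsto> AList q A]" then show "vtype (VList (v1 # vs)) (erase (AList q A))"
    using assms unfolding models_def by auto
  have ph: "Phi_env E [xh \<mapsto> A, xt \<mapsto> AList q A] = phi v1 A + phi (VList vs) (AList q A)"
    using Phi_env_upd[of xt "[xh \<mapsto> A]" E "AList q A"] assms by auto
  have nn: "0 \<le> phi v1 A + phi (VList vs) (AList q A)" "0 \<le> q" using assms(4) unfolding ann_ok_def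
    by (auto intro!: add_nonneg_nonneg phi_nonneg simp del: phi.simps)
  have pc: "phi (VList (v1 # vs)) (AList q A) = q + phi v1 A + phi (VList vs) (AList q A)"
    by (simp add: algebra_simps)
  fix p r :: rat assume h: "0 \<le> p" "0 \<le> r" "q + K KCons + Phi_env E [xh \<mapsto> A, xt \<mapsto> AList q A] + r \<le> p"
  have "eval K P E (p - K KCons + K KCons) (p - K KCons) (ECons xh xt) (VList (v1 # vs))"
    using h assms ph nn by (intro E_Cons) auto
  then show "\<exists>p'. 0 \<le> p' \<and> eval K P E p p' (ECons xh xt) (VList (v1 # vs)) \<and> 0 + phi (VList (v1 # vs)) (AList q A) + r \<le> p'"
    using h ph nn pc by (intro exI[of _ "p - K KCons"]) auto
qed

lemma app_sd:
  assumes PT: "prog_typed K \<Sigma> P" and Pf: "P f = (y, ef)" and Ex: "E x = Some u"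
    and IH: "\<And>G a b T. typed K \<Sigma> G a b ef T \<Longrightarrow> cl K P (E(y \<mapsto> u)) ef v G a b T"
    and sig: "(A1, q, q', A2) \<in> \<Sigma> f" "0 \<le> q" and ann: "ann_ok [x \<mapsto> A1] (q + K KApp) q' A2"
  shows "cl K P E (EApp f x) v [x \<mapsto> A1] (q + K KApp) q' A2"
proof -
  have "typed K \<Sigma> [y \<mapsto> A1] q q' ef A2" using PT sig Pf unfolding prog_typed_def by force
  then have c: "cl K P (E(y \<mapsto> u)) ef v [y \<mapsto> A1] q q' A2" by (rule IH)
  show ?thesis
  proof (rule clI)
    assume "models E [x \<mapsto> A1]"
    then have m: "models (E(y \<mapsto> u)) [y \<mapsto> A1]" using Ex unfolding models_def by auto
    show "vtype v (erase A2)" by (rule clD(1)[OF c m])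
    have nn: "0 \<le> phi u A1" using ann unfolding ann_ok_def by (auto intro: phi_nonneg)
    fix p r :: rat assume h: "0 \<le> p" "0 \<le> r" "q + K KApp + Phi_env E [x \<mapsto> A1] + r \<le> p"
    obtain p' where p': "0 \<le> p'" "eval K P (E(y \<mapsto> u)) (p - K KApp) p' ef v" "q' + phi v A2 + r \<le> p'"
      using clD(2)[OF c m, of "p - K KApp" r] h nn sig Ex by auto
    have "eval K P E (p - K KApp + K KApp) p' (EApp f x) v"
      using p' Pf Ex h by (intro E_App) auto
    then show "\<exists>p'. 0 \<le> p' \<and> eval K P E p p' (EApp f x) v \<and> q' + phi v A2 + r \<le> p'"
      using p' by (intro exI[of _ p']) auto
  qed
qed

lemma models_add: "dom \<Gamma>1 \<inter> dom \<Gamma>2 = {} \<Longrightarrow> models E (\<Gamma>1 ++ \<Gamma>2) \<Longrightarrow> models E \<Gamma>1 \<and> models E \<Gamma>2"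
proof -
  assume d: "dom \<Gamma>1 \<inter> dom \<Gamma>2 = {}" and m: "models E (\<Gamma>1 ++ \<Gamma>2)"
  have "(\<Gamma>1 ++ \<Gamma>2) y = \<Gamma>1 y" if "y \<in> dom \<Gamma>1" for y
  proof -
    have "\<Gamma>2 y = None" using d that by auto
    then show ?thesis by (simp add: map_add_def)
  qed
  moreover have "(\<Gamma>1 ++ \<Gamma>2) y = \<Gamma>2 y" if "y \<in> dom \<Gamma>2" for y
    using that by auto
  ultimately show ?thesis using m unfolding models_def by (metis (no_types, lifting) domIff)
qed

lemma ann_upd_nonneg: "ann_ok (\<Gamma>(x \<mapsto> A)) q q' B \<Longrightarrow> x \<notin> dom \<Gamma> \<Longrightarrow> \<forall>y\<in>dom \<Gamma>. nonneg (the (\<Gamma> y))"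
proof
  fix y assume a: "ann_ok (\<Gamma>(x \<mapsto> A)) q q' B" "x \<notin> dom \<Gamma>" "y \<in> dom \<Gamma>"
  then have "y \<noteq> x" by auto
  with a show "nonneg (the (\<Gamma> y))" unfolding ann_ok_def by (metis domIff fun_upd_other)
qed

lemma let_sd:
  assumes IH1: "\<And>G a b T. typed K \<Sigma> G a b e1 T \<Longrightarrow> cl K P E e1 v1 G a b T"
    and IH2: "\<And>G a b T. typed K \<Sigma> G a b e2 T \<Longrightarrow> cl K P (E(x \<mapsto> v1)) e2 v G a b T"
    and f: "finite (dom E)"
    and t1: "typed K \<Sigma> \<Gamma>1 (q - K KLet) q1 e1 A1" and t2: "typed K \<Sigma> (\<Gamma>2(x \<mapsto> A1)) q1 q' e2 A2"
    and d: "dom \<Gamma>1 \<inter> dom \<Gamma>2 = {}" "x \<notin> dom \<Gamma>2"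
  shows "cl K P E (ELet x e1 e2) v (\<Gamma>1 ++ \<Gamma>2) q q' A2"
proof (rule clI)
  have c1: "cl K P E e1 v1 \<Gamma>1 (q - K KLet) q1 A1" by (rule IH1[OF t1])
  have c2: "cl K P (E(x \<mapsto> v1)) e2 v (\<Gamma>2(x \<mapsto> A1)) q1 q' A2" by (rule IH2[OF t2])
  assume m: "models E (\<Gamma>1 ++ \<Gamma>2)"
  have m1: "models E \<Gamma>1" and m2: "models E \<Gamma>2" using models_add[OF d(1) m] by auto
  have fin1: "finite (dom \<Gamma>1)" and fin2: "finite (dom \<Gamma>2)" using models_fin m1 m2 f by auto
  have vt1: "vtype v1 (erase A1)" by (rule clD(1)[OF c1 m1])
  have m2': "models (E(x \<mapsto> v1)) (\<Gamma>2(x \<mapsto> A1))" using m2 vt1 d unfolding models_def by auto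
  show "vtype v (erase A2)" by (rule clD(1)[OF c2 m2'])
  have a1: "0 \<le> q - K KLet" using typed_ann[OF t1] unfolding ann_ok_def by auto
  have nn2: "0 \<le> Phi_env E \<Gamma>2"
    using typed_ann[OF t2] d(2) by (intro Phi_env_nonneg ann_upd_nonneg)
  have ph: "Phi_env E (\<Gamma>1 ++ \<Gamma>2) = Phi_env E \<Gamma>1 + Phi_env E \<Gamma>2" using Phi_env_add d fin1 fin2 by blast
  have ph2: "Phi_env (E(x \<mapsto> v1)) (\<Gamma>2(x \<mapsto> A1)) = Phi_env E \<Gamma>2 + phi v1 A1"
  proof -
    have "Phi_env (E(x \<mapsto> v1)) \<Gamma>2 = Phi_env E \<Gamma>2" by (rule Phi_env_cong) (use d(2) in auto)
    then show ?thesis using Phi_env_upd[OF d(2) fin2, of "E(x \<mapsto> v1)" A1] by simp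
  qed
  fix p r :: rat assume h: "0 \<le> p" "0 \<le> r" "q + Phi_env E (\<Gamma>1 ++ \<Gamma>2) + r \<le> p"
  obtain p1 where p1: "0 \<le> p1" "eval K P E (p - K KLet) p1 e1 v1" "q1 + phi v1 A1 + (Phi_env E \<Gamma>2 + r) \<le> p1"
    using clD(2)[OF c1 m1, of "p - K KLet" "Phi_env E \<Gamma>2 + r"] h a1 nn2 ph ann_nonneg[OF typed_ann[OF t1], of E] by auto
  obtain p' where p': "0 \<le> p'" "eval K P (E(x \<mapsto> v1)) p1 p' e2 v" "q' + phi v A2 + r \<le> p'"
    using clD(2)[OF c2 m2', of p1 r] p1 h ph2 by auto
  have "eval K P E p p' (ELet x e1 e2) v" using p1 p' h by (intro E_Let)
  then show "\<exists>p'. 0 \<le> p' \<and> eval K P E p p' (ELet x e1 e2) v \<and> q' + phi v A2 + r \<le> p'"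
    using p' by blast
qed


lemma if_sd:
  assumes IH: "\<And>G a b T. typed K \<Sigma> G a b ec T \<Longrightarrow> cl K P E ec v G a b T"
    and mk: "\<And>p p'. eval K P E (p - K KCond) p' ec v \<Longrightarrow> 0 \<le> p \<Longrightarrow> eval K P E p p' e v"
    and f: "finite (dom E)"
    and t: "typed K \<Sigma> \<Gamma> (q - K KCond) q' ec A" and x: "x \<notin> dom \<Gamma>"
  shows "cl K P E e v (\<Gamma>(x \<mapsto> ABool)) q q' A"
proof (rule clI)
  have c: "cl K P E ec v \<Gamma> (q - K KCond) q' A" by (rule IH[OF t])
  assume m': "models E (\<Gamma>(x \<mapsto> ABool))"
  then have m: "models E \<Gamma>" using models_upd[OF x] by simp
  show "vtype v (erase A)" by (rule clD(1)[OF c m])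
  have fin: "finite (dom \<Gamma>)" using models_fin[OF m f] .
  have ph: "Phi_env E (\<Gamma>(x \<mapsto> ABool)) = Phi_env E \<Gamma>" using Phi_env_upd[OF x fin] by simp
  have a1: "0 \<le> q - K KCond" "0 \<le> Phi_env E \<Gamma>" using typed_ann[OF t] ann_nonneg[OF typed_ann[OF t]] unfolding ann_ok_def by auto
  fix p r :: rat assume h: "0 \<le> p" "0 \<le> r" "q + Phi_env E (\<Gamma>(x \<mapsto> ABool)) + r \<le> p"
  obtain p' where p': "0 \<le> p'" "eval K P E (p - K KCond) p' ec v" "q' + phi v A + r \<le> p'"
    using clD(2)[OF c m, of "p - K KCond" r] h a1 ph by auto
  then show "\<exists>p'. 0 \<le> p' \<and> eval K P E p p' e v \<and> q' + phi v A + r \<le> p'"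
    using mk h by blast
qed

lemma matchP_sd:
  assumes Ex: "E x = Some (VPair v1 v2)"
    and IH: "\<And>G a b T. typed K \<Sigma> G a b e T \<Longrightarrow> cl K P (E(x1 \<mapsto> v1, x2 \<mapsto> v2)) e v G a b T"
    and f: "finite (dom E)"
    and t: "typed K \<Sigma> (\<Gamma>(x1 \<mapsto> A1, x2 \<mapsto> A2)) (q - K KMatchP) q' e A"
    and d: "x1 \<noteq> x2" "x1 \<notin> dom \<Gamma>" "x2 \<notin> dom \<Gamma>" "x \<notin> dom \<Gamma>"
  shows "cl K P E (EMatchP x x1 x2 e) v (\<Gamma>(x \<mapsto> AProd A1 A2)) q q' A"
proof (rule clI)
  define E' where "E' = E(x1 \<mapsto> v1, x2 \<mapsto> v2)"
  have c: "cl K P E' e v (\<Gamma>(x1 \<mapsto> A1, x2 \<mapsto> A2)) (q - K KMatchP) q' A" unfolding E'_def by (rule IH[OF t])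
  assume m': "models E (\<Gamma>(x \<mapsto> AProd A1 A2))"
  then have m: "models E \<Gamma>" and vt: "vtype v1 (erase A1)" "vtype v2 (erase A2)"
    using models_upd[OF d(4)] Ex by auto
  have E'eq: "E' y = E y" if "y \<in> dom \<Gamma>" for y using that d unfolding E'_def by auto
  have m2: "models E' (\<Gamma>(x1 \<mapsto> A1, x2 \<mapsto> A2))"
    using m vt d E'eq unfolding models_def E'_def by auto
  show "vtype v (erase A)" by (rule clD(1)[OF c m2])
  have fin: "finite (dom \<Gamma>)" using models_fin[OF m f] .
  have x2n: "x2 \<notin> dom (\<Gamma>(x1 \<mapsto> A1))" using d by auto
  have ph1: "Phi_env E (\<Gamma>(x \<mapsto> AProd A1 A2)) = Phi_env E \<Gamma> + phi v1 A1 + phi v2 A2"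
    using Phi_env_upd[OF d(4) fin] Ex by simp
  have "Phi_env E' \<Gamma> = Phi_env E \<Gamma>" by (rule Phi_env_cong) (use E'eq in auto)
  moreover have "Phi_env E' (\<Gamma>(x1 \<mapsto> A1, x2 \<mapsto> A2)) = Phi_env E' (\<Gamma>(x1 \<mapsto> A1)) + phi v2 A2"
    using Phi_env_upd[OF x2n, of E' A2] fin unfolding E'_def by simp
  moreover have "Phi_env E' (\<Gamma>(x1 \<mapsto> A1)) = Phi_env E' \<Gamma> + phi v1 A1"
    using Phi_env_upd[OF d(2) fin, of E' A1] d(1) unfolding E'_def by simp
  ultimately have ph2: "Phi_env E' (\<Gamma>(x1 \<mapsto> A1, x2 \<mapsto> A2)) = Phi_env E \<Gamma> + phi v1 A1 + phi v2 A2" by simp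
  have a1: "0 \<le> q - K KMatchP" using typed_ann[OF t] unfolding ann_ok_def by auto
  fix p r :: rat assume h: "0 \<le> p" "0 \<le> r" "q + Phi_env E (\<Gamma>(x \<mapsto> AProd A1 A2)) + r \<le> p"
  obtain p' where p': "0 \<le> p'" "eval K P E' (p - K KMatchP) p' e v" "q' + phi v A + r \<le> p'"
    using clD(2)[OF c m2, of "p - K KMatchP" r] h a1 ph1 ph2 ann_nonneg[OF typed_ann[OF t], of E'] by auto
  have "eval K P E p p' (EMatchP x x1 x2 e) v" using p'(2) Ex h unfolding E'_def by (intro E_MatchP)
  then show "\<exists>p'. 0 \<le> p' \<and> eval K P E p p' (EMatchP x x1 x2 e) v \<and> q' + phi v A + r \<le> p'"
    using p' by blast
qed

lemma matchN_sd:
  assumes Ex: "E x = Some (VList [])"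
    and IH: "\<And>G a b T. typed K \<Sigma> G a b e1 T \<Longrightarrow> cl K P E e1 v G a b T"
    and f: "finite (dom E)"
    and t: "typed K \<Sigma> \<Gamma> (q - K KMatchN) q' e1 B" and x: "x \<notin> dom \<Gamma>"
  shows "cl K P E (EMatchL x e1 xh xt e2) v (\<Gamma>(x \<mapsto> AList pp A)) q q' B"
proof (rule clI)
  have c: "cl K P E e1 v \<Gamma> (q - K KMatchN) q' B" by (rule IH[OF t])
  assume m': "models E (\<Gamma>(x \<mapsto> AList pp A))"
  then have m: "models E \<Gamma>" using models_upd[OF x] by simp
  show "vtype v (erase B)" by (rule clD(1)[OF c m])
  have fin: "finite (dom \<Gamma>)" using models_fin[OF m f] .
  have ph: "Phi_env E (\<Gamma>(x \<mapsto> AList pp A)) = Phi_env E \<Gamma>" using Phi_env_upd[OF x fin] Ex by simp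
  have a1: "0 \<le> q - K KMatchN" using typed_ann[OF t] unfolding ann_ok_def by auto
  fix p r :: rat assume h: "0 \<le> p" "0 \<le> r" "q + Phi_env E (\<Gamma>(x \<mapsto> AList pp A)) + r \<le> p"
  obtain p' where p': "0 \<le> p'" "eval K P E (p - K KMatchN) p' e1 v" "q' + phi v B + r \<le> p'"
    using clD(2)[OF c m, of "p - K KMatchN" r] h a1 ph ann_nonneg[OF typed_ann[OF t], of E] by auto
  have "eval K P E p p' (EMatchL x e1 xh xt e2) v" using p'(2) Ex h by (intro E_MatchN)
  then show "\<exists>p'. 0 \<le> p' \<and> eval K P E p p' (EMatchL x e1 xh xt e2) v \<and> q' + phi v B + r \<le> p'"
    using p' by blast
qed

lemma matchC_sd:
  assumes Ex: "E x = Some (VList (v1 # vs))"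
    and IH: "\<And>G a b T. typed K \<Sigma> G a b e2 T \<Longrightarrow> cl K P (E(xh \<mapsto> v1, xt \<mapsto> VList vs)) e2 v G a b T"
    and f: "finite (dom E)"
    and t: "typed K \<Sigma> (\<Gamma>(xh \<mapsto> A, xt \<mapsto> AList pp A)) (q + pp - K KMatchL) q' e2 B"
    and d: "xh \<noteq> xt" "xh \<notin> dom \<Gamma>" "xt \<notin> dom \<Gamma>" "x \<notin> dom \<Gamma>"
  shows "cl K P E (EMatchL x e1 xh xt e2) v (\<Gamma>(x \<mapsto> AList pp A)) q q' B"
proof (rule clI)
  define E' where "E' = E(xh \<mapsto> v1, xt \<mapsto> VList vs)"
  have c: "cl K P E' e2 v (\<Gamma>(xh \<mapsto> A, xt \<mapsto> AList pp A)) (q + pp - K KMatchL) q' B" unfolding E'_def by (rule IH[OF t])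
  assume m': "models E (\<Gamma>(x \<mapsto> AList pp A))"
  then have m: "models E \<Gamma>" and vt: "vtype v1 (erase A)" "vtype (VList vs) (erase (AList pp A))"
    using models_upd[OF d(4)] Ex by auto
  have E'eq: "E' y = E y" if "y \<in> dom \<Gamma>" for y using that d unfolding E'_def by auto
  have m2: "models E' (\<Gamma>(xh \<mapsto> A, xt \<mapsto> AList pp A))"
    using m vt d E'eq unfolding models_def E'_def by auto
  show "vtype v (erase B)" by (rule clD(1)[OF c m2])
  have fin: "finite (dom \<Gamma>)" using models_fin[OF m f] .
  have x2n: "xt \<notin> dom (\<Gamma>(xh \<mapsto> A))" using d by auto
  have ph1: "Phi_env E (\<Gamma>(x \<mapsto> AList pp A)) = Phi_env E \<Gamma> + pp + phi v1 A + phi (VList vs) (AList pp A)"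
    using Phi_env_upd[OF d(4) fin] Ex by (simp add: algebra_simps)
  have "Phi_env E' \<Gamma> = Phi_env E \<Gamma>" by (rule Phi_env_cong) (use E'eq in auto)
  moreover have "Phi_env E' (\<Gamma>(xh \<mapsto> A, xt \<mapsto> AList pp A)) = Phi_env E' (\<Gamma>(xh \<mapsto> A)) + phi (VList vs) (AList pp A)"
    using Phi_env_upd[OF x2n, of E' "AList pp A"] fin unfolding E'_def by (simp del: phi.simps)
  moreover have "Phi_env E' (\<Gamma>(xh \<mapsto> A)) = Phi_env E' \<Gamma> + phi v1 A"
    using Phi_env_upd[OF d(2) fin, of E' A] d(1) unfolding E'_def by simp
  ultimately have ph2: "Phi_env E' (\<Gamma>(xh \<mapsto> A, xt \<mapsto> AList pp A)) = Phi_env E \<Gamma> + phi v1 A + phi (VList vs) (AList pp A)"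
    by (simp del: phi.simps)
  have a1: "0 \<le> q + pp - K KMatchL" using typed_ann[OF t] unfolding ann_ok_def by auto
  fix p r :: rat assume h: "0 \<le> p" "0 \<le> r" "q + Phi_env E (\<Gamma>(x \<mapsto> AList pp A)) + r \<le> p"
  obtain p' where p': "0 \<le> p'" "eval K P E' (p - K KMatchL) p' e2 v" "q' + phi v B + r \<le> p'"
    using clD(2)[OF c m2, of "p - K KMatchL" r] h a1 ph1 ph2 ann_nonneg[OF typed_ann[OF t], of E'] by (auto simp del: phi.simps)
  have "eval K P E p p' (EMatchL x e1 xh xt e2) v" using p'(2) Ex h unfolding E'_def by (intro E_MatchC)
  then show "\<exists>p'. 0 \<le> p' \<and> eval K P E p p' (EMatchL x e1 xh xt e2) v \<and> q' + phi v B + r \<le> p'"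
    using p' by blast
qed

lemma share_sd:
  assumes Ex: "E x = Some v1"
    and IH: "\<And>G a b T. typed K \<Sigma> G a b e T \<Longrightarrow> cl K P ((E(x := None))(x1 \<mapsto> v1, x2 \<mapsto> v1)) e v G a b T"
    and f: "finite (dom E)"
    and t: "typed K \<Sigma> (\<Gamma>(x1 \<mapsto> A1, x2 \<mapsto> A2)) q q' e B" and s: "share_rel A A1 A2"
    and d: "x1 \<noteq> x2" "x1 \<notin> dom \<Gamma>" "x2 \<notin> dom \<Gamma>" "x \<notin> dom \<Gamma>"
  shows "cl K P E (EShare x x1 x2 e) v (\<Gamma>(x \<mapsto> A)) q q' B"
proof (rule clI)
  note sp = share_props[OF s]
  define E' where "E' = (E(x := None))(x1 \<mapsto> v1, x2 \<mapsto> v1)"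
  have c: "cl K P E' e v (\<Gamma>(x1 \<mapsto> A1, x2 \<mapsto> A2)) q q' B" unfolding E'_def by (rule IH[OF t])
  assume m': "models E (\<Gamma>(x \<mapsto> A))"
  then have m: "models E \<Gamma>" and vt: "vtype v1 (erase A)"
    using models_upd[OF d(4)] Ex by auto
  have E'eq: "E' y = E y" if "y \<in> dom \<Gamma>" for y using that d unfolding E'_def by auto
  have m2: "models E' (\<Gamma>(x1 \<mapsto> A1, x2 \<mapsto> A2))"
    using m vt d E'eq sp unfolding models_def E'_def by auto
  show "vtype v (erase B)" by (rule clD(1)[OF c m2])
  have fin: "finite (dom \<Gamma>)" using models_fin[OF m f] .
  have x2n: "x2 \<notin> dom (\<Gamma>(x1 \<mapsto> A1))" using d by auto
  have ph1: "Phi_env E (\<Gamma>(x \<mapsto> A)) = Phi_env E \<Gamma> + phi v1 A1 + phi v1 A2"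
    using Phi_env_upd[OF d(4) fin] Ex sp by simp
  have "Phi_env E' \<Gamma> = Phi_env E \<Gamma>" by (rule Phi_env_cong) (use E'eq in auto)
  moreover have "Phi_env E' (\<Gamma>(x1 \<mapsto> A1, x2 \<mapsto> A2)) = Phi_env E' (\<Gamma>(x1 \<mapsto> A1)) + phi v1 A2"
    using Phi_env_upd[OF x2n, of E' A2] fin unfolding E'_def by simp
  moreover have "Phi_env E' (\<Gamma>(x1 \<mapsto> A1)) = Phi_env E' \<Gamma> + phi v1 A1"
    using Phi_env_upd[OF d(2) fin, of E' A1] d(1) unfolding E'_def by simp
  ultimately have ph2: "Phi_env E' (\<Gamma>(x1 \<mapsto> A1, x2 \<mapsto> A2)) = Phi_env E \<Gamma> + phi v1 A1 + phi v1 A2" by simp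
  fix p r :: rat assume h: "0 \<le> p" "0 \<le> r" "q + Phi_env E (\<Gamma>(x \<mapsto> A)) + r \<le> p"
  obtain p' where p': "0 \<le> p'" "eval K P E' p p' e v" "q' + phi v B + r \<le> p'"
    using clD(2)[OF c m2, of p r] h ph1 ph2 by auto
  have "eval K P E p p' (EShare x x1 x2 e) v" using p'(2) Ex unfolding E'_def by (intro E_Share)
  then show "\<exists>p'. 0 \<le> p' \<and> eval K P E p p' (EShare x x1 x2 e) v \<and> q' + phi v B + r \<le> p'"
    using p' by blast
qed

lemma case_unit:
  "typed K \<Sigma> G a b (EUnit) T \<Longrightarrow> finite (dom E) \<Longrightarrow> cl K P E (EUnit) (VUnit) G a b T"
proof (induction G a b "EUnit" T rule: typed.induct)
  case T_Unit show ?case by (rule const_sd) (auto intro: E_Unit)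
next
  case T_Relax from T_Relax.hyps(2)[OF T_Relax.prems] T_Relax.hyps(3,4) show ?case by (rule cl_relax)
next
  case T_Weak from T_Weak.hyps(2)[OF T_Weak.prems] T_Weak.hyps(3,4) T_Weak.prems(1) show ?case by (rule cl_weak)
next
  case T_Sub from T_Sub.hyps(2)[OF T_Sub.prems] T_Sub.hyps(3) show ?case by (rule cl_sub)
next
  case T_Super from T_Super.hyps(2)[OF T_Super.prems] T_Super.hyps(3,4) T_Super.prems(1) show ?case by (rule cl_super)
qed


lemma case_true:
  "typed K \<Sigma> G a b (ETrue) T \<Longrightarrow> finite (dom E) \<Longrightarrow> cl K P E (ETrue) (VBool True) G a b T"
proof (induction G a b "ETrue" T rule: typed.induct)
  case T_True show ?case by (rule const_sd) (auto intro: E_True)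
next
  case T_Relax from T_Relax.hyps(2)[OF T_Relax.prems] T_Relax.hyps(3,4) show ?case by (rule cl_relax)
next
  case T_Weak from T_Weak.hyps(2)[OF T_Weak.prems] T_Weak.hyps(3,4) T_Weak.prems(1) show ?case by (rule cl_weak)
next
  case T_Sub from T_Sub.hyps(2)[OF T_Sub.prems] T_Sub.hyps(3) show ?case by (rule cl_sub)
next
  case T_Super from T_Super.hyps(2)[OF T_Super.prems] T_Super.hyps(3,4) T_Super.prems(1) show ?case by (rule cl_super)
qed


lemma case_false:
  "typed K \<Sigma> G a b (EFalse) T \<Longrightarrow> finite (dom E) \<Longrightarrow> cl K P E (EFalse) (VBool False) G a b T"
proof (induction G a b "EFalse" T rule: typed.induct)
  case T_False show ?case by (rule const_sd) (auto intro: E_False)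
next
  case T_Relax from T_Relax.hyps(2)[OF T_Relax.prems] T_Relax.hyps(3,4) show ?case by (rule cl_relax)
next
  case T_Weak from T_Weak.hyps(2)[OF T_Weak.prems] T_Weak.hyps(3,4) T_Weak.prems(1) show ?case by (rule cl_weak)
next
  case T_Sub from T_Sub.hyps(2)[OF T_Sub.prems] T_Sub.hyps(3) show ?case by (rule cl_sub)
next
  case T_Super from T_Super.hyps(2)[OF T_Super.prems] T_Super.hyps(3,4) T_Super.prems(1) show ?case by (rule cl_super)
qed


lemma case_int:
  "typed K \<Sigma> G a b (EInt n) T \<Longrightarrow> finite (dom E) \<Longrightarrow> cl K P E (EInt n) (VInt n) G a b T"
proof (induction G a b "EInt n" T rule: typed.induct)
  case T_Int show ?case by (rule const_sd) (auto intro: E_Int)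
next
  case T_Relax from T_Relax.hyps(2)[OF T_Relax.prems] T_Relax.hyps(3,4) show ?case by (rule cl_relax)
next
  case T_Weak from T_Weak.hyps(2)[OF T_Weak.prems] T_Weak.hyps(3,4) T_Weak.prems(1) show ?case by (rule cl_weak)
next
  case T_Sub from T_Sub.hyps(2)[OF T_Sub.prems] T_Sub.hyps(3) show ?case by (rule cl_sub)
next
  case T_Super from T_Super.hyps(2)[OF T_Super.prems] T_Super.hyps(3,4) T_Super.prems(1) show ?case by (rule cl_super)
qed


lemma case_nil:
  "typed K \<Sigma> G a b (ENil) T \<Longrightarrow> finite (dom E) \<Longrightarrow> cl K P E (ENil) (VList []) G a b T"
proof (induction G a b "ENil" T rule: typed.induct)
  case T_Nil show ?case by (rule const_sd) (auto intro: E_Nil)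
next
  case T_Relax from T_Relax.hyps(2)[OF T_Relax.prems] T_Relax.hyps(3,4) show ?case by (rule cl_relax)
next
  case T_Weak from T_Weak.hyps(2)[OF T_Weak.prems] T_Weak.hyps(3,4) T_Weak.prems(1) show ?case by (rule cl_weak)
next
  case T_Sub from T_Sub.hyps(2)[OF T_Sub.prems] T_Sub.hyps(3) show ?case by (rule cl_sub)
next
  case T_Super from T_Super.hyps(2)[OF T_Super.prems] T_Super.hyps(3,4) T_Super.prems(1) show ?case by (rule cl_super)
qed


lemma case_var:
  "typed K \<Sigma> G a b (EVar x) T \<Longrightarrow> finite (dom E) \<Longrightarrow> E x = Some v \<Longrightarrow> cl K P E (EVar x) (v) G a b T"
proof (induction G a b "EVar x" T rule: typed.induct)
  case T_Var show ?case by (rule var_sd) (use T_Var.prems T_Var.hyps in simp_all)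
next
  case T_Relax from T_Relax.hyps(2)[OF T_Relax.prems] T_Relax.hyps(3,4) show ?case by (rule cl_relax)
next
  case T_Weak from T_Weak.hyps(2)[OF T_Weak.prems] T_Weak.hyps(3,4) T_Weak.prems(1) show ?case by (rule cl_weak)
next
  case T_Sub from T_Sub.hyps(2)[OF T_Sub.prems] T_Sub.hyps(3) show ?case by (rule cl_sub)
next
  case T_Super from T_Super.hyps(2)[OF T_Super.prems] T_Super.hyps(3,4) T_Super.prems(1) show ?case by (rule cl_super)
qed


lemma case_op:
  "typed K \<Sigma> G a b (EOp d x1 x2) T \<Longrightarrow> finite (dom E) \<Longrightarrow> E x1 = Some v1 \<Longrightarrow> E x2 = Some v2 \<Longrightarrow> eval_op d v1 v2 = Some v \<Longrightarrow> cl K P E (EOp d x1 x2) (v) G a b T"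
proof (induction G a b "EOp d x1 x2" T rule: typed.induct)
  case T_OpB show ?case by (rule op_sd[OF T_OpB.prems(2,3,4)]) (use T_OpB.hyps in auto)
next
  case T_OpCmp show ?case by (rule op_sd[OF T_OpCmp.prems(2,3,4)]) (use T_OpCmp.hyps in auto)
next
  case T_OpArith show ?case by (rule op_sd[OF T_OpArith.prems(2,3,4)]) (use T_OpArith.hyps in auto)
next
  case T_Relax from T_Relax.hyps(2)[OF T_Relax.prems] T_Relax.hyps(3,4) show ?case by (rule cl_relax)
next
  case T_Weak from T_Weak.hyps(2)[OF T_Weak.prems] T_Weak.hyps(3,4) T_Weak.prems(1) show ?case by (rule cl_weak)
next
  case T_Sub from T_Sub.hyps(2)[OF T_Sub.prems] T_Sub.hyps(3) show ?case by (rule cl_sub)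
next
  case T_Super from T_Super.hyps(2)[OF T_Super.prems] T_Super.hyps(3,4) T_Super.prems(1) show ?case by (rule cl_super)
qed


lemma case_pair:
  "typed K \<Sigma> G a b (EPair x1 x2) T \<Longrightarrow> finite (dom E) \<Longrightarrow> E x1 = Some v1 \<Longrightarrow> E x2 = Some v2 \<Longrightarrow> cl K P E (EPair x1 x2) (VPair v1 v2) G a b T"
proof (induction G a b "EPair x1 x2" T rule: typed.induct)
  case T_Pair show ?case by (rule pair_sd) (use T_Pair.prems T_Pair.hyps in simp_all)
next
  case T_Relax from T_Relax.hyps(2)[OF T_Relax.prems] T_Relax.hyps(3,4) show ?case by (rule cl_relax)
next
  case T_Weak from T_Weak.hyps(2)[OF T_Weak.prems] T_Weak.hyps(3,4) T_Weak.prems(1) show ?case by (rule cl_weak)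
next
  case T_Sub from T_Sub.hyps(2)[OF T_Sub.prems] T_Sub.hyps(3) show ?case by (rule cl_sub)
next
  case T_Super from T_Super.hyps(2)[OF T_Super.prems] T_Super.hyps(3,4) T_Super.prems(1) show ?case by (rule cl_super)
qed


lemma case_cons:
  "typed K \<Sigma> G a b (ECons xh xt) T \<Longrightarrow> finite (dom E) \<Longrightarrow> E xh = Some v1 \<Longrightarrow> E xt = Some (VList vs) \<Longrightarrow> cl K P E (ECons xh xt) (VList (v1 # vs)) G a b T"
proof (induction G a b "ECons xh xt" T rule: typed.induct)
  case T_Cons show ?case by (rule cons_sd) (use T_Cons.prems T_Cons.hyps in simp_all)
next
  case T_Relax from T_Relax.hyps(2)[OF T_Relax.prems] T_Relax.hyps(3,4) show ?case by (rule cl_relax)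
next
  case T_Weak from T_Weak.hyps(2)[OF T_Weak.prems] T_Weak.hyps(3,4) T_Weak.prems(1) show ?case by (rule cl_weak)
next
  case T_Sub from T_Sub.hyps(2)[OF T_Sub.prems] T_Sub.hyps(3) show ?case by (rule cl_sub)
next
  case T_Super from T_Super.hyps(2)[OF T_Super.prems] T_Super.hyps(3,4) T_Super.prems(1) show ?case by (rule cl_super)
qed


lemma case_app:
  "typed K \<Sigma> G a b (EApp f x) T \<Longrightarrow> finite (dom E) \<Longrightarrow> prog_typed K \<Sigma> P \<Longrightarrow> P f = (y, ef) \<Longrightarrow> E x = Some u \<Longrightarrow> (\<And>G a b T. typed K \<Sigma> G a b ef T \<Longrightarrow> cl K P (E(y \<mapsto> u)) ef v G a b T) \<Longrightarrow> cl K P E (EApp f x) (v) G a b T"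
proof (induction G a b "EApp f x" T rule: typed.induct)
  case T_App show ?case by (rule app_sd[OF T_App.prems(2,3,4,5) T_App.hyps])
next
  case T_Relax from T_Relax.hyps(2)[OF T_Relax.prems] T_Relax.hyps(3,4) show ?case by (rule cl_relax)
next
  case T_Weak from T_Weak.hyps(2)[OF T_Weak.prems] T_Weak.hyps(3,4) T_Weak.prems(1) show ?case by (rule cl_weak)
next
  case T_Sub from T_Sub.hyps(2)[OF T_Sub.prems] T_Sub.hyps(3) show ?case by (rule cl_sub)
next
  case T_Super from T_Super.hyps(2)[OF T_Super.prems] T_Super.hyps(3,4) T_Super.prems(1) show ?case by (rule cl_super)
qed


lemma case_let:
  "typed K \<Sigma> G a b (ELet x e1 e2) T \<Longrightarrow> finite (dom E) \<Longrightarrow> (\<And>G a b T. typed K \<Sigma> G a b e1 T \<Longrightarrow> cl K P E e1 v1 G a b T) \<Longrightarrow> (\<And>G a b T. typed K \<Sigma> G a b e2 T \<Longrightarrow> cl K P (E(x \<mapsto> v1)) e2 v G a b T) \<Longrightarrow> cl K P E (ELet x e1 e2) (v) G a b T"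
proof (induction G a b "ELet x e1 e2" T rule: typed.induct)
  case T_Let show ?case by (rule let_sd[OF T_Let.prems(2,3,1)]) (use T_Let.hyps in simp_all)
next
  case T_Relax from T_Relax.hyps(2)[OF T_Relax.prems] T_Relax.hyps(3,4) show ?case by (rule cl_relax)
next
  case T_Weak from T_Weak.hyps(2)[OF T_Weak.prems] T_Weak.hyps(3,4) T_Weak.prems(1) show ?case by (rule cl_weak)
next
  case T_Sub from T_Sub.hyps(2)[OF T_Sub.prems] T_Sub.hyps(3) show ?case by (rule cl_sub)
next
  case T_Super from T_Super.hyps(2)[OF T_Super.prems] T_Super.hyps(3,4) T_Super.prems(1) show ?case by (rule cl_super)
qed


lemma case_ifT:
  "typed K \<Sigma> G a b (EIf x et ef) T \<Longrightarrow> finite (dom E) \<Longrightarrow> E x = Some (VBool True) \<Longrightarrow> (\<And>G a b T. typed K \<Sigma> G a b et T \<Longrightarrow> cl K P E et v G a b T) \<Longrightarrow> cl K P E (EIf x et ef) (v) G a b T"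
proof (induction G a b "EIf x et ef" T rule: typed.induct)
  case T_If show ?case by (rule if_sd[OF T_If.prems(3) _ T_If.prems(1)]) (use T_If.hyps T_If.prems(2) in \<open>auto intro: E_IfT\<close>)
next
  case T_Relax from T_Relax.hyps(2)[OF T_Relax.prems] T_Relax.hyps(3,4) show ?case by (rule cl_relax)
next
  case T_Weak from T_Weak.hyps(2)[OF T_Weak.prems] T_Weak.hyps(3,4) T_Weak.prems(1) show ?case by (rule cl_weak)
next
  case T_Sub from T_Sub.hyps(2)[OF T_Sub.prems] T_Sub.hyps(3) show ?case by (rule cl_sub)
next
  case T_Super from T_Super.hyps(2)[OF T_Super.prems] T_Super.hyps(3,4) T_Super.prems(1) show ?case by (rule cl_super)
qed


lemma case_ifF:
  "typed K \<Sigma> G a b (EIf x et ef) T \<Longrightarrow> finite (dom E) \<Longrightarrow> E x = Some (VBool False) \<Longrightarrow> (\<And>G a b T. typed K \<Sigma> G a b ef T \<Longrightarrow> cl K P E ef v G a b T) \<Longrightarrow> cl K P E (EIf x et ef) (v) G a b T"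
proof (induction G a b "EIf x et ef" T rule: typed.induct)
  case T_If show ?case by (rule if_sd[OF T_If.prems(3) _ T_If.prems(1)]) (use T_If.hyps T_If.prems(2) in \<open>auto intro: E_IfF\<close>)
next
  case T_Relax from T_Relax.hyps(2)[OF T_Relax.prems] T_Relax.hyps(3,4) show ?case by (rule cl_relax)
next
  case T_Weak from T_Weak.hyps(2)[OF T_Weak.prems] T_Weak.hyps(3,4) T_Weak.prems(1) show ?case by (rule cl_weak)
next
  case T_Sub from T_Sub.hyps(2)[OF T_Sub.prems] T_Sub.hyps(3) show ?case by (rule cl_sub)
next
  case T_Super from T_Super.hyps(2)[OF T_Super.prems] T_Super.hyps(3,4) T_Super.prems(1) show ?case by (rule cl_super)
qed


lemma case_matchP:
  "typed K \<Sigma> G a b (EMatchP x x1 x2 e) T \<Longrightarrow> finite (dom E) \<Longrightarrow> E x = Some (VPair v1 v2) \<Longrightarrow> (\<And>G a b T. typed K \<Sigma> G a b e T \<Longrightarrow> cl K P (E(x1 \<mapsto> v1, x2 \<mapsto> v2)) e v G a b T) \<Longrightarrow> cl K P E (EMatchP x x1 x2 e) (v) G a b T"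
proof (induction G a b "EMatchP x x1 x2 e" T rule: typed.induct)
  case T_MatchP show ?case by (rule matchP_sd[OF T_MatchP.prems(2,3,1)]) (use T_MatchP.hyps in simp_all)
next
  case T_Relax from T_Relax.hyps(2)[OF T_Relax.prems] T_Relax.hyps(3,4) show ?case by (rule cl_relax)
next
  case T_Weak from T_Weak.hyps(2)[OF T_Weak.prems] T_Weak.hyps(3,4) T_Weak.prems(1) show ?case by (rule cl_weak)
next
  case T_Sub from T_Sub.hyps(2)[OF T_Sub.prems] T_Sub.hyps(3) show ?case by (rule cl_sub)
next
  case T_Super from T_Super.hyps(2)[OF T_Super.prems] T_Super.hyps(3,4) T_Super.prems(1) show ?case by (rule cl_super)
qed


lemma case_matchN:
  "typed K \<Sigma> G a b (EMatchL x e1 xh xt e2) T \<Longrightarrow> finite (dom E) \<Longrightarrow> E x = Some (VList []) \<Longrightarrow> (\<And>G a b T. typed K \<Sigma> G a b e1 T \<Longrightarrow> cl K P E e1 v G a b T) \<Longrightarrow> cl K P E (EMatchL x e1 xh xt e2) (v) G a b T"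
proof (induction G a b "EMatchL x e1 xh xt e2" T rule: typed.induct)
  case T_MatchL show ?case by (rule matchN_sd[OF T_MatchL.prems(2,3,1)]) (use T_MatchL.hyps in simp_all)
next
  case T_Relax from T_Relax.hyps(2)[OF T_Relax.prems] T_Relax.hyps(3,4) show ?case by (rule cl_relax)
next
  case T_Weak from T_Weak.hyps(2)[OF T_Weak.prems] T_Weak.hyps(3,4) T_Weak.prems(1) show ?case by (rule cl_weak)
next
  case T_Sub from T_Sub.hyps(2)[OF T_Sub.prems] T_Sub.hyps(3) show ?case by (rule cl_sub)
next
  case T_Super from T_Super.hyps(2)[OF T_Super.prems] T_Super.hyps(3,4) T_Super.prems(1) show ?case by (rule cl_super)
qed


lemma case_matchC:
  "typed K \<Sigma> G a b (EMatchL x e1 xh xt e2) T \<Longrightarrow> finite (dom E) \<Longrightarrow> E x = Some (VList (v1 # vs)) \<Longrightarrow> (\<And>G a b T. typed K \<Sigma> G a b e2 T \<Longrightarrow> cl K P (E(xh \<mapsto> v1, xt \<mapsto> VList vs)) e2 v G a b T) \<Longrightarrow> cl K P E (EMatchL x e1 xh xt e2) (v) G a b T"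
proof (induction G a b "EMatchL x e1 xh xt e2" T rule: typed.induct)
  case T_MatchL show ?case by (rule matchC_sd[OF T_MatchL.prems(2,3,1)]) (use T_MatchL.hyps in simp_all)
next
  case T_Relax from T_Relax.hyps(2)[OF T_Relax.prems] T_Relax.hyps(3,4) show ?case by (rule cl_relax)
next
  case T_Weak from T_Weak.hyps(2)[OF T_Weak.prems] T_Weak.hyps(3,4) T_Weak.prems(1) show ?case by (rule cl_weak)
next
  case T_Sub from T_Sub.hyps(2)[OF T_Sub.prems] T_Sub.hyps(3) show ?case by (rule cl_sub)
next
  case T_Super from T_Super.hyps(2)[OF T_Super.prems] T_Super.hyps(3,4) T_Super.prems(1) show ?case by (rule cl_super)
qed


lemma case_share:
  "typed K \<Sigma> G a b (EShare x x1 x2 e) T \<Longrightarrow> finite (dom E) \<Longrightarrow> E x = Some v1 \<Longrightarrow> (\<And>G a b T. typed K \<Sigma> G a b e T \<Longrightarrow> cl K P ((E(x := None))(x1 \<mapsto> v1, x2 \<mapsto> v1)) e v G a b T) \<Longrightarrow> cl K P E (EShare x x1 x2 e) (v) G a b T"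
proof (induction G a b "EShare x x1 x2 e" T rule: typed.induct)
  case T_Share show ?case by (rule share_sd[OF T_Share.prems(2,3,1)]) (use T_Share.hyps in simp_all)
next
  case T_Relax from T_Relax.hyps(2)[OF T_Relax.prems] T_Relax.hyps(3,4) show ?case by (rule cl_relax)
next
  case T_Weak from T_Weak.hyps(2)[OF T_Weak.prems] T_Weak.hyps(3,4) T_Weak.prems(1) show ?case by (rule cl_weak)
next
  case T_Sub from T_Sub.hyps(2)[OF T_Sub.prems] T_Sub.hyps(3) show ?case by (rule cl_sub)
next
  case T_Super from T_Super.hyps(2)[OF T_Super.prems] T_Super.hyps(3,4) T_Super.prems(1) show ?case by (rule cl_super)
qed


lemma sound:
  "eval K P E q0 q0' e v \<Longrightarrow> prog_typed K \<Sigma> P \<Longrightarrow> finite (dom E) \<Longrightarrow>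
   typed K \<Sigma> G a b e T \<Longrightarrow> cl K P E e v G a b T"
proof (induction arbitrary: G a b T rule: eval.induct)
  case E_Unit then show ?case by (intro case_unit)
next
  case E_True then show ?case by (intro case_true)
next
  case E_False then show ?case by (intro case_false)
next
  case E_Int then show ?case by (intro case_int)
next
  case E_Nil then show ?case by (intro case_nil)
next
  case E_Var then show ?case by (intro case_var)
next
  case E_Op then show ?case by (intro case_op)
next
  case E_Pair then show ?case by (intro case_pair)
next
  case E_Cons then show ?case by (intro case_cons)
next
  case (E_App P f y ef E x u K q q' v)
  have fin: "finite (dom (E(y \<mapsto> u)))" using E_App.prems(2) by simp
  show ?case
    by (rule case_app[OF E_App.prems(3,2,1) E_App.hyps(1,2) E_App.IH[OF E_App.prems(1) fin]])
next
  case (E_Let K P E q q1 e1 v1 x q' e2 v)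
  have fin: "finite (dom (E(x \<mapsto> v1)))" using E_Let.prems(2) by simp
  show ?case
    by (rule case_let[OF E_Let.prems(3,2) E_Let.IH(1)[OF E_Let.prems(1,2)] E_Let.IH(2)[OF E_Let.prems(1) fin]])
next
  case (E_IfT E x K P q q' et v ef)
  show ?case by (rule case_ifT[OF E_IfT.prems(3,2) E_IfT.hyps(1) E_IfT.IH[OF E_IfT.prems(1,2)]])
next
  case (E_IfF E x K P q q' ef v et)
  show ?case by (rule case_ifF[OF E_IfF.prems(3,2) E_IfF.hyps(1) E_IfF.IH[OF E_IfF.prems(1,2)]])
next
  case (E_MatchP E x v1 v2 K P x1 x2 q q' e v)
  have fin: "finite (dom (E(x1 \<mapsto> v1, x2 \<mapsto> v2)))" using E_MatchP.prems(2) by simp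
  show ?case
    by (rule case_matchP[OF E_MatchP.prems(3,2) E_MatchP.hyps(1) E_MatchP.IH[OF E_MatchP.prems(1) fin]])
next
  case (E_MatchN E x K P q q' e1 v xh xt e2)
  show ?case by (rule case_matchN[OF E_MatchN.prems(3,2) E_MatchN.hyps(1) E_MatchN.IH[OF E_MatchN.prems(1,2)]])
next
  case (E_MatchC E x v1 vs K P xh xt q q' e2 v e1)
  have fin: "finite (dom (E(xh \<mapsto> v1, xt \<mapsto> VList vs)))" using E_MatchC.prems(2) by simp
  show ?case
    by (rule case_matchC[OF E_MatchC.prems(3,2) E_MatchC.hyps(1) E_MatchC.IH[OF E_MatchC.prems(1) fin]])
next
  case (E_Share E x v1 K P x1 x2 q q' e v)
  have fin: "finite (dom ((E(x := None))(x1 \<mapsto> v1, x2 \<mapsto> v1)))" using E_Share.prems(2) by simp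
  show ?case
    by (rule case_share[OF E_Share.prems(3,2) E_Share.hyps(1) E_Share.IH[OF E_Share.prems(1) fin]])
qed

theorem theorem4:
  fixes K :: costs and \<Sigma> :: sig and P :: prog and E :: env and \<Gamma> :: ctx
    and e :: expr and v :: val and A :: aty and q q' p r :: rat
  assumes "wf_sig \<Sigma>"
    and "prog_typed K \<Sigma> P"
    and "finite (dom E)"
    and "models E \<Gamma>"
    and "\<exists>q0 q0'. eval K P E q0 q0' e v"
    and "typed K \<Sigma> \<Gamma> q q' e A"
    and "0 \<le> p" and "0 \<le> r"
    and "p \<ge> q + Phi_env E \<Gamma> + r"
  shows "\<exists>p'. 0 \<le> p' \<and> eval K P E p p' e v \<and> p' \<ge> q' + phi v A + r"
proof -
  obtain q0 q0' where ev: "eval K P E q0 q0' e v" using assms(5) by blast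
  have c: "cl K P E e v \<Gamma> q q' A" by (rule sound[OF ev assms(2,3,6)])
  show ?thesis using clD(2)[OF c assms(4) assms(7,8,9)] by blast
qed

end
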